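(* Let $h>0$ and $n\ge1$. For $(\theta_1,\dots,\theta_n)$ with $1>\theta_1>\theta_2>\cdots>\theta_n>0$ let $\Theta\in\mathbb{R}^{n\times n}$ be the matrix with entries $\Theta_{ii}=\frac{1}{4h}\cot(\pi\theta_i)$ and, for $i\neq j$, $\Theta_{ij}=\frac{1}{4h}\left(\cot\left(\pi\frac{\theta_i+\theta_j}{2}\right)-\cot\left(\pi\frac{\theta_i-\theta_j}{2}\right)\right)$. Then there exists $(\theta_1,\dots,\theta_n)\in(0,1)^n$ with $1>\theta_1>\theta_2>\cdots>\theta_n>0$ for which $\Theta$ is singular. *)

theory Defs
  imports "HOL-Analysis.Analysis" "Jordan_Normal_Form.Determinant"
begin

text \<open>The matrix Theta (indices 0..n-1 correspond to 1..n in the paper).\<close>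
definition Theta_mat :: "real \<Rightarrow> nat \<Rightarrow> (nat \<Rightarrow> real) \<Rightarrow> real mat" where
  "Theta_mat h n \<theta> = mat n n (\<lambda>(i, j).
     if i = j then (1 / (4 * h)) * cot (pi * \<theta> i)
     else (1 / (4 * h)) * (cot (pi * (\<theta> i + \<theta> j) / 2) - cot (pi * (\<theta> i - \<theta> j) / 2)))"

end

theory Submission imports Defs begin

lemma cot_pi_shift: "cot (x + pi) = cot x"
  by (simp add: cot_def)

definition ff :: "nat \<Rightarrow> int \<Rightarrow> real" where
  "ff n k = cot (real_of_int k * pi / (2 * real n))"

lemma ff_per: assumes "n \<ge> 1" shows "ff n (k + 2 * int n) = ff n k"
proof -
  have "real_of_int (k + 2 * int n) * pi / (2 * real n) = real_of_int k * pi / (2 * real n) + pi"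
    using assms by (simp add: field_simps)
  then show ?thesis unfolding ff_def by (simp add: cot_pi_shift)
qed

lemma ff_odd: "ff n (- k) = - ff n k"
  unfolding ff_def by (simp flip: cot_minus)

definition WW :: "nat \<Rightarrow> int \<Rightarrow> real" where
  "WW n a = (\<Sum>i<2*n. ff n (a + int i))"

lemma WW_step: assumes "n \<ge> 1" shows "WW n (a + 1) = WW n a"
proof -
  have "WW n (a+1) - WW n a = (\<Sum>i<2*n. ff n (a + int (Suc i)) - ff n (a + int i))"
    unfolding WW_def by (simp add: sum_subtractf add_ac)
  also have "\<dots> = ff n (a + int (2*n)) - ff n (a + int 0)"
    by (rule sum_lessThan_telescope)
  also have "\<dots> = 0" using ff_per[OF assms, of a] by simp
  finally show ?thesis by simp
qed

lemma WW_const: assumes "n \<ge> 1" shows "WW n a = WW n b"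
proof -
  have "\<And>a. WW n a = WW n 0"
  proof -
    fix a :: int
    show "WW n a = WW n 0"
    proof (induction a rule: int_induct[where k=0])
      case base then show ?case by simp
    next
      case (step1 i) then show ?case using WW_step[OF assms, of i] by simp
    next
      case (step2 i) then show ?case using WW_step[OF assms, of "i - 1"] by simp
    qed
  qed
  then show ?thesis by metis
qed

lemma WW_zero: assumes "n \<ge> 1" shows "WW n a = 0"
proof -
  have "WW n (- int n + 1) = (\<Sum>i<2*n. ff n (- int n + 1 + int (2*n - Suc i)))"
    unfolding WW_def by (rule sum.nat_diff_reindex[symmetric])
  also have "\<dots> = (\<Sum>i<2*n. - ff n (- int n + int i))"
  proof (rule sum.cong[OF refl])
    fix i assume "i \<in> {..<2*n}"
    then have "- int n + 1 + int (2*n - Suc i) = - (- int n + int i)" by simp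
    then show "ff n (- int n + 1 + int (2*n - Suc i)) = - ff n (- int n + int i)"
      using ff_odd[of n "int i - int n"] by simp
  qed
  also have "\<dots> = - WW n (- int n)" unfolding WW_def by (simp add: sum_negf)
  finally have "WW n (- int n + 1) = - WW n (- int n)" .
  moreover have "WW n (- int n + 1) = WW n (- int n)" by (rule WW_step[OF assms])
  ultimately have "WW n (- int n) = 0" by simp
  then show ?thesis using WW_const[OF assms] by metis
qed

lemma colsum: assumes "n \<ge> 1" "j < n"
  shows "(\<Sum>i<n. ff n (2 * int n - 1 - int i - int j) - ff n (int j - int i)) = 0"
proof -
  define g where "g = (\<lambda>i::nat. ff n (- int n - int j + int i))"
  have s1: "(\<Sum>i<2*n. g i) = (\<Sum>i\<in>{0..<n}. g i) + (\<Sum>i\<in>{n..<n+n}. g i)"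
    using sum.atLeastLessThan_concat[of 0 n "n+n" g] by (simp add: lessThan_atLeast0 mult_2)
  have s2: "(\<Sum>i\<in>{n..<n+n}. g i) = (\<Sum>i\<in>{0..<n}. g (i+n))"
    using sum.shift_bounds_nat_ivl[of g 0 n n] by simp
  have "WW n (- int n - int j) = (\<Sum>i<n. ff n (- int n - int j + int i)) + (\<Sum>i<n. ff n (- int j + int i))"
    unfolding WW_def using s1 s2 by (simp add: g_def lessThan_atLeast0 algebra_simps)
  also have "(\<Sum>i<n. ff n (- int n - int j + int i)) = (\<Sum>i<n. ff n (- int n - int j + int (n - Suc i)))"
    by (rule sum.nat_diff_reindex[symmetric])
  also have "\<dots> = (\<Sum>i<n. ff n (2 * int n - 1 - int i - int j))"
  proof (rule sum.cong[OF refl])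
    fix i assume "i \<in> {..<n}"
    then have eq: "2 * int n - 1 - int i - int j = (- int n - int j + int (n - Suc i)) + 2 * int n" by simp
    then show "ff n (- int n - int j + int (n - Suc i)) = ff n (2 * int n - 1 - int i - int j)"
      by (simp only: eq ff_per[OF assms(1)])
  qed
  also have "(\<Sum>i<n. ff n (- int j + int i)) = (\<Sum>i<n. - ff n (int j - int i))"
    by (rule sum.cong[OF refl]) (simp flip: ff_odd)
  finally have "WW n (- int n - int j) = (\<Sum>i<n. ff n (2 * int n - 1 - int i - int j) - ff n (int j - int i))"
    by (simp add: sum_subtractf sum_negf)
  then show ?thesis using WW_zero[OF assms(1)] by simp
qed


lemma entry:
  assumes "n \<ge> 1" "i < n" "j < n"
  and \<theta>_def: "\<theta> = (\<lambda>i::nat. real_of_int (2 * int n - 2 * int i - 1) / (2 * real n))"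
  shows "Theta_mat h n \<theta> $$ (i, j) = (1 / (4 * h)) * (ff n (2 * int n - 1 - int i - int j) - ff n (int j - int i))"
proof -
  have n0: "real n > 0" using assms by simp
  show ?thesis
  proof (cases "i = j")
    case True
    have "pi * \<theta> j = real_of_int (2 * int n - 1 - int j - int j) * pi / (2 * real n)"
      unfolding \<theta>_def by (simp add: field_simps)
    then have "cot (pi * \<theta> j) = ff n (2 * int n - 1 - int i - int j) - ff n (int j - int i)"
      using True unfolding ff_def by simp
    then show ?thesis using True assms(3) unfolding Theta_mat_def by simp
  next
    case False
    have a: "pi * (\<theta> i + \<theta> j) / 2 = real_of_int (2 * int n - 1 - int i - int j) * pi / (2 * real n)"
      unfolding \<theta>_def using n0 by (simp add: field_simps)
    have b: "pi * (\<theta> i - \<theta> j) / 2 = real_of_int (int j - int i) * pi / (2 * real n)"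
      unfolding \<theta>_def using n0 by (simp add: field_simps)
    have c: "cot (pi * (\<theta> i + \<theta> j) / 2) - cot (pi * (\<theta> i - \<theta> j) / 2) = ff n (2 * int n - 1 - int i - int j) - ff n (int j - int i)"
      unfolding ff_def a b by simp
    show ?thesis using False assms(2,3) c unfolding Theta_mat_def by simp
  qed
qed

theorem proposition5p4:
  fixes h :: real and n :: nat
  assumes "h > 0" and "n \<ge> 1"
  shows "\<exists>\<theta> :: nat \<Rightarrow> real.
           (\<forall>i<n. 0 < \<theta> i \<and> \<theta> i < 1) \<and>
           (\<forall>i j. i < j \<and> j < n \<longrightarrow> \<theta> j < \<theta> i) \<and>
           det (Theta_mat h n \<theta>) = 0"
proof -
  define \<theta> where "\<theta> = (\<lambda>i::nat. real_of_int (2 * int n - 2 * int i - 1) / (2 * real n))"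
  have n0: "real n > 0" using assms by simp
  have r1: "\<forall>i<n. 0 < \<theta> i \<and> \<theta> i < 1"
  proof (intro allI impI conjI)
    fix i assume "i < n"
    then show "0 < \<theta> i" unfolding \<theta>_def using n0 by (simp add: field_simps)
    show "\<theta> i < 1" unfolding \<theta>_def using n0 by (simp add: field_simps)
  qed
  have r2: "\<forall>i j. i < j \<and> j < n \<longrightarrow> \<theta> j < \<theta> i"
    unfolding \<theta>_def using n0 by (auto simp add: divide_strict_right_mono)
  let ?T = "Theta_mat h n \<theta>"
  have T: "?T \<in> carrier_mat n n" unfolding Theta_mat_def by simp
  have Tt: "transpose_mat ?T \<in> carrier_mat n n" using T by simp
  have "transpose_mat ?T *\<^sub>v (vec n (\<lambda>_. (1::real))) = 0\<^sub>v n"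
  proof (rule eq_vecI)
    fix i assume i: "i < dim_vec (0\<^sub>v n :: real vec)"
    then have i': "i < n" by simp
    have "(transpose_mat ?T *\<^sub>v (vec n (\<lambda>_. (1::real)))) $ i = (\<Sum>j<n. ?T $$ (j, i))"
      using i' T by (simp add: scalar_prod_def lessThan_atLeast0)
    also have "\<dots> = (\<Sum>j<n. (1 / (4 * h)) * (ff n (2 * int n - 1 - int j - int i) - ff n (int i - int j)))"
      by (rule sum.cong[OF refl]) (use i' entry[OF assms(2) _ _ \<theta>_def] in simp)
    also have "\<dots> = (1 / (4 * h)) * (\<Sum>j<n. ff n (2 * int n - 1 - int j - int i) - ff n (int i - int j))"
      by (simp add: sum_distrib_left)
    also have "\<dots> = 0" using colsum[OF assms(2) i'] by simp
    finally show "(transpose_mat ?T *\<^sub>v (vec n (\<lambda>_. (1::real)))) $ i = 0\<^sub>v n $ i" using i' by simp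
  next
    show "dim_vec (transpose_mat ?T *\<^sub>v (vec n (\<lambda>_. (1::real)))) = dim_vec (0\<^sub>v n :: real vec)" using T by simp
  qed
  moreover have "(vec n (\<lambda>_. 1) :: real vec) \<noteq> 0\<^sub>v n"
  proof
    assume "(vec n (\<lambda>_. 1) :: real vec) = 0\<^sub>v n"
    then have "(vec n (\<lambda>_. 1) :: real vec) $ 0 = 0\<^sub>v n $ 0" by simp
    then show False using assms(2) by simp
  qed
  ultimately have "det (transpose_mat ?T) = 0"
    using det_0_iff_vec_prod_zero[OF Tt] vec_carrier[of n "\<lambda>_. (1::real)"] by blast
  then have "det ?T = 0" using det_transpose[OF T] by simp
  then show ?thesis using r1 r2 by blast
qed

end
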